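(* For $n\geqslant1$, $m\geqslant0$, let $\mathfrak{g}_{n,m}$ be the number of inversion sequences of length $n$ avoiding both $010$ and $120$ with maximum value $m$ (so $\mathfrak{g}_{n,0}=1$). Then for all $n\geqslant 1$ and $m\geqslant1$, $$\mathfrak{g}_{n,m}=\sum_{p=m+1}^{n}\sum_{j=0}^{m-1}\mathfrak{g}_{p-1,j}\cdot\mathfrak{e}_{n-p,\,m-j},$$ where $\mathfrak{e}_{a,b}$ is the number of words of length $a$ over an alphabet $\{1,\dots,b\}$ avoiding $010$ and $120$ (with $\mathfrak{e}_{0,b}=1$, counting the empty word).
   Context: An inversion sequence of length $n$ is a sequence $(\sigma_1,\dots,\sigma_n)$ of integers with $0\leqslant\sigma_i<i$. A sequence contains a pattern $p$ if some subsequence is order-isomorphic to $p$; otherwise it avoids $p$. Avoiding $010$: no $i<j<l$ with $\sigma_i=\sigma_l<\sigma_j$. Avoiding $120$: no $i<j<l$ with $\sigma_l<\sigma_i<\sigma_j$. *)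

theory Defs
  imports Main
begin

text \<open>Sequences are lists of naturals, 0-indexed: position i (0-based) corresponds to
  sigma_(i+1), so the inversion condition 0 <= sigma_(i+1) < i+1 reads s!i <= i.\<close>

definition inversion_seq :: "nat list \<Rightarrow> bool" where
  "inversion_seq s \<longleftrightarrow> (\<forall>i < length s. s ! i < Suc i)"

definition contains_010 :: "nat list \<Rightarrow> bool" where
  "contains_010 s \<longleftrightarrow> (\<exists>i j l. i < j \<and> j < l \<and> l < length s \<and> s ! i = s ! l \<and> s ! l < s ! j)"

definition contains_120 :: "nat list \<Rightarrow> bool" where
  "contains_120 s \<longleftrightarrow> (\<exists>i j l. i < j \<and> j < l \<and> l < length s \<and> s ! l < s ! i \<and> s ! i < s ! j)"

definition avoids_010_120 :: "nat list \<Rightarrow> bool" where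
  "avoids_010_120 s \<longleftrightarrow> \<not> contains_010 s \<and> \<not> contains_120 s"

definition gcount :: "nat \<Rightarrow> nat \<Rightarrow> nat" where
  "gcount n m = card {s. length s = n \<and> inversion_seq s \<and> avoids_010_120 s \<and> Max (set s) = m}"

definition ecount :: "nat \<Rightarrow> nat \<Rightarrow> nat" where
  "ecount a b = card {w. length w = a \<and> set w \<subseteq> {1..b} \<and> avoids_010_120 w}"

end

theory Submission imports Defs begin

definition cont :: "(nat \<Rightarrow> nat \<Rightarrow> nat \<Rightarrow> bool) \<Rightarrow> nat list \<Rightarrow> bool" where
  "cont Q s \<longleftrightarrow> (\<exists>i j l. i < j \<and> j < l \<and> l < length s \<and> Q (s!i) (s!j) (s!l))"

lemma c010: "contains_010 s = cont (\<lambda>x y z. x = z \<and> z < y) s"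
  unfolding contains_010_def cont_def by auto
lemma c120: "contains_120 s = cont (\<lambda>x y z. z < x \<and> x < y) s"
  unfolding contains_120_def cont_def by auto

lemma cont_append:
  assumes ab: "\<forall>x\<in>set a. \<forall>y\<in>set b. x < y" and Q: "\<forall>x y z. Q x y z \<longrightarrow> \<not> x < z"
  shows "cont Q (a@b) \<longleftrightarrow> cont Q a \<or> cont Q b"
proof
  assume "cont Q (a@b)"
  then obtain i j l where h: "i<j" "j<l" "l<length (a@b)" "Q ((a@b)!i) ((a@b)!j) ((a@b)!l)"
    unfolding cont_def by blast
  consider "l < length a" | "length a \<le> i" | "i < length a" "length a \<le> l" by linarith
  then show "cont Q a \<or> cont Q b"
  proof cases
    case 1 then have "cont Q a" using h unfolding cont_def
      by (intro exI[of _ i] exI[of _ j] exI[of _ l]) (auto simp: nth_append)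
    then show ?thesis ..
  next
    case 2 then have "cont Q b" using h unfolding cont_def
      by (intro exI[of _ "i - length a"] exI[of _ "j - length a"] exI[of _ "l - length a"]) (auto simp: nth_append)
    then show ?thesis ..
  next
    case 3
    have "(a@b)!i \<in> set a" using 3 by (simp add: nth_append)
    moreover have "(a@b)!l \<in> set b" using 3 h by (simp add: nth_append)
    ultimately have "(a@b)!i < (a@b)!l" using ab by blast
    then have "\<not> Q ((a@b)!i) ((a@b)!j) ((a@b)!l)" using Q by blast
    then show ?thesis using h(4) by contradiction
  qed
next
  assume "cont Q a \<or> cont Q b"
  then show "cont Q (a@b)"
  proof
    assume "cont Q a"
    then obtain i j l where h: "i<j" "j<l" "l<length a" "Q (a!i) (a!j) (a!l)" unfolding cont_def by blast
    then show ?thesis unfolding cont_def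
      by (intro exI[of _ i] exI[of _ j] exI[of _ l]) (auto simp: nth_append)
  next
    assume "cont Q b"
    then obtain i j l where h: "i<j" "j<l" "l<length b" "Q (b!i) (b!j) (b!l)" unfolding cont_def by blast
    then show ?thesis unfolding cont_def
      by (intro exI[of _ "i + length a"] exI[of _ "j + length a"] exI[of _ "l+length a"]) (auto simp: nth_append)
  qed
qed

lemma cont_Cons:
  assumes c: "\<forall>y\<in>set c. y \<le> m" and Q: "\<forall>y z. y \<le> m \<longrightarrow> z \<le> m \<longrightarrow> \<not> Q m y z"
  shows "cont Q (m#c) \<longleftrightarrow> cont Q c"
proof
  assume "cont Q (m#c)"
  then obtain i j l where h: "i<j" "j<l" "l<length (m#c)" "Q ((m#c)!i) ((m#c)!j) ((m#c)!l)"
    unfolding cont_def by blast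
  show "cont Q c"
  proof (cases i)
    case 0
    have "(m#c)!j \<in> set c" "(m#c)!l \<in> set c" using h 0 by (auto simp: nth_Cons')
    then have "(m#c)!j \<le> m" "(m#c)!l \<le> m" using c by auto
    then have "\<not> Q m ((m#c)!j) ((m#c)!l)" using Q by blast
    then show ?thesis using h(4) 0 by simp
  next
    case (Suc i')
    then show ?thesis using h unfolding cont_def
      by (intro exI[of _ i'] exI[of _ "j - 1"] exI[of _ "l - 1"]) (auto simp: nth_Cons')
  qed
next
  assume "cont Q c"
  then obtain i j l where h: "i<j" "j<l" "l<length c" "Q (c!i) (c!j) (c!l)" unfolding cont_def by blast
  then show "cont Q (m#c)" unfolding cont_def
    by (intro exI[of _ "Suc i"] exI[of _ "Suc j"] exI[of _ "Suc l"]) auto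
qed

lemma cont_shift:
  assumes "\<forall>x y z. Q (k+x) (k+y) (k+z) = Q x y z"
  shows "cont Q (map ((+) k) w) = cont Q w"
proof -
  have *: "\<And>i j l. i < j \<and> j < l \<and> l < length w \<Longrightarrow>
     Q (map ((+) k) w ! i) (map ((+) k) w ! j) (map ((+) k) w ! l) = Q (w!i) (w!j) (w!l)"
    using assms by auto
  show ?thesis unfolding cont_def
  proof
    assume "\<exists>i j l. i < j \<and> j < l \<and> l < length (map ((+) k) w) \<and>
      Q (map ((+) k) w ! i) (map ((+) k) w ! j) (map ((+) k) w ! l)"
    then obtain i j l where "i < j" "j < l" "l < length w"
      "Q (map ((+) k) w ! i) (map ((+) k) w ! j) (map ((+) k) w ! l)" by auto
    then show "\<exists>i j l. i < j \<and> j < l \<and> l < length w \<and> Q (w ! i) (w ! j) (w ! l)"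
      using * by blast
  next
    assume "\<exists>i j l. i < j \<and> j < l \<and> l < length w \<and> Q (w ! i) (w ! j) (w ! l)"
    then obtain i j l where "i < j" "j < l" "l < length w" "Q (w ! i) (w ! j) (w ! l)" by auto
    then show "\<exists>i j l. i < j \<and> j < l \<and> l < length (map ((+) k) w) \<and>
      Q (map ((+) k) w ! i) (map ((+) k) w ! j) (map ((+) k) w ! l)"
      using * by (metis length_map)
  qed
qed

lemma av_append:
  assumes "\<forall>x\<in>set a. \<forall>y\<in>set b. x < y"
  shows "avoids_010_120 (a@b) \<longleftrightarrow> avoids_010_120 a \<and> avoids_010_120 b"
  unfolding avoids_010_120_def c010 c120
  using cont_append[OF assms, of "\<lambda>x y z. x = z \<and> z < y"] cont_append[OF assms, of "\<lambda>x y z. z < x \<and> x < y"]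
  by auto

lemma av_Cons:
  assumes "\<forall>y\<in>set c. y \<le> m"
  shows "avoids_010_120 (m#c) \<longleftrightarrow> avoids_010_120 c"
  unfolding avoids_010_120_def c010 c120
  using cont_Cons[OF assms, of "\<lambda>x y z. x = z \<and> z < y"] cont_Cons[OF assms, of "\<lambda>x y z. z < x \<and> x < y"]
  by auto

lemma av_shift: "avoids_010_120 (map ((+) k) w) \<longleftrightarrow> avoids_010_120 w"
  unfolding avoids_010_120_def c010 c120
  using cont_shift[of "\<lambda>x y z. x = z \<and> z < y" k w] cont_shift[of "\<lambda>x y z. z < x \<and> x < y" k w]
  by auto

lemma first_eq:
  assumes "m \<notin> set a" "m \<notin> set a'" "a @ m # c = a' @ m # c'"
  shows "a = a' \<and> c = c'"
  using assms
proof (induction a arbitrary: a')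
  case Nil then show ?case by (cases a') auto
next
  case (Cons x a) then show ?case by (cases a') auto
qed


lemma cont_mono:
  assumes "cont Q a \<or> cont Q b" shows "cont Q (a@b)"
  using assms
  proof
    assume "cont Q a"
    then obtain i j l where h: "i<j" "j<l" "l<length a" "Q (a!i) (a!j) (a!l)" unfolding cont_def by blast
    then show ?thesis unfolding cont_def
      by (intro exI[of _ i] exI[of _ j] exI[of _ l]) (auto simp: nth_append)
  next
    assume "cont Q b"
    then obtain i j l where h: "i<j" "j<l" "l<length b" "Q (b!i) (b!j) (b!l)" unfolding cont_def by blast
    then show ?thesis unfolding cont_def
      by (intro exI[of _ "i + length a"] exI[of _ "j + length a"] exI[of _ "l+length a"]) (auto simp: nth_append)
  qed

lemma av_parts: "avoids_010_120 (a@b) \<Longrightarrow> avoids_010_120 a \<and> avoids_010_120 b"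
  unfolding avoids_010_120_def c010 c120 using cont_mono by blast

definition S :: "nat \<Rightarrow> nat \<Rightarrow> nat list set" where
  "S n m = {s. length s = n \<and> inversion_seq s \<and> avoids_010_120 s \<and> Max (set s) = m}"
definition E :: "nat \<Rightarrow> nat \<Rightarrow> nat list set" where
  "E a b = {w. length w = a \<and> set w \<subseteq> {1..b} \<and> avoids_010_120 w}"

lemma finS: "finite (S n m)"
proof (rule finite_subset[OF _ finite_lists_length_eq[OF finite_lessThan[of n], of n]])
  show "S n m \<subseteq> {xs. set xs \<subseteq> {..<n} \<and> length xs = n}"
  proof
    fix s assume "s \<in> S n m"
    then have "length s = n" "\<forall>i<length s. s ! i < Suc i" unfolding S_def inversion_seq_def by auto
    have "set s \<subseteq> {..<n}"
    proof
      fix x assume "x \<in> set s"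
      then obtain i where i: "i < length s" "x = s ! i" by (metis in_set_conv_nth)
      then have "x < Suc i" using \<open>\<forall>i<length s. s ! i < Suc i\<close> by blast
      then show "x \<in> {..<n}" using i \<open>length s = n\<close> by simp
    qed
    then show "s \<in> {xs. set xs \<subseteq> {..<n} \<and> length xs = n}" using \<open>length s = n\<close> by simp
  qed
qed

lemma finE: "finite (E a b)"
  by (rule finite_subset[OF _ finite_lists_length_eq[OF finite_atLeastAtMost[of 1 b], of a]])
     (auto simp: E_def)

theorem mainTheorem7:
  fixes n m :: nat
  assumes "n \<ge> 1" and "m \<ge> 1"
  shows "gcount n m = (\<Sum>p = m+1..n. \<Sum>j = 0..<m. gcount (p - 1) j * ecount (n - p) (m - j))"
proof -
  define I where "I = (SIGMA p:{m+1..n}. {0..<m})"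
  define T where "T = (SIGMA x:I. S (fst x - 1) (snd x) \<times> E (n - fst x) (m - snd x))"
  define F where "F = (\<lambda>(x::nat\<times>nat, (a::nat list, b::nat list)). a @ m # map ((+) (snd x)) b)"
  have Sprops: "a \<noteq> [] \<and> Max (set a) = j \<and> (\<forall>x\<in>set a. x \<le> j) \<and> length a = p - 1 \<and> inversion_seq a
      \<and> avoids_010_120 a"
    if "a \<in> S (p - 1) j" "p \<ge> m + 1" for a p j
  proof -
    have "a \<noteq> []" using that assms unfolding S_def by auto
    then show ?thesis using that unfolding S_def by auto
  qed
  have inj: "inj_on F T"
  proof
    fix x y assume x: "x \<in> T" and y: "y \<in> T" and eq: "F x = F y"
    obtain p j a b where xe: "x = ((p,j),(a,b))" by (metis prod.collapse)
    obtain p' j' a' b' where ye: "y = ((p',j'),(a',b'))" by (metis prod.collapse)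
    have px: "p \<ge> m+1" "j < m" "a \<in> S (p - 1) j" "b \<in> E (n-p) (m-j)" using x unfolding xe T_def I_def by auto
    have py: "p' \<ge> m+1" "j' < m" "a' \<in> S (p' - 1) j'" "b' \<in> E (n-p') (m-j')" using y unfolding ye T_def I_def by auto
    have ma: "m \<notin> set a" using Sprops[OF px(3,1)] px(2) by auto
    have ma': "m \<notin> set a'" using Sprops[OF py(3,1)] py(2) by auto
    have "a @ m # map ((+) j) b = a' @ m # map ((+) j') b'" using eq unfolding xe ye F_def by simp
    from first_eq[OF ma ma' this] have aa: "a = a'" and bb: "map ((+) j) b = map ((+) j') b'" by auto
    have jj: "j = j'" using Sprops[OF px(3,1)] Sprops[OF py(3,1)] aa by auto
    have pp: "p = p'" using Sprops[OF px(3,1)] Sprops[OF py(3,1)] aa px(1) py(1) by auto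
    have "b = b'" using bb jj by (simp add: inj_map_eq_map)
    then show "x = y" using xe ye aa jj pp by simp
  qed
  have sub1: "F ` T \<subseteq> S n m"
  proof
    fix s assume "s \<in> F ` T"
    then obtain p j a b where p: "p \<ge> m+1" "p \<le> n" "j < m" "a \<in> S (p - 1) j" "b \<in> E (n-p) (m-j)"
      and s: "s = a @ m # map ((+) j) b"
      unfolding T_def I_def F_def by auto
    note A = Sprops[OF p(4,1)]
    have bE: "length b = n - p" "set b \<subseteq> {1..m-j}" "avoids_010_120 b" using p(5) unfolding E_def by auto
    have c0: "\<forall>y\<in>set b. 1 \<le> y \<and> y \<le> m - j" using bE(2) by auto
    have c1: "\<forall>y\<in>set (map ((+) j) b). y \<le> m \<and> j < y" using c0 p(3) by auto
    have len: "length s = n" using s A bE p by simp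
    have inv: "inversion_seq s"
      unfolding inversion_seq_def
    proof (intro allI impI)
      fix i assume i: "i < length s"
      consider "i < length a" | "i = length a" | "i > length a" by linarith
      then show "s ! i < Suc i"
      proof cases
        case 1 then show ?thesis using A s unfolding inversion_seq_def by (simp add: nth_append)
      next
        case 2 then show ?thesis using A s p by (simp add: nth_append)
      next
        case 3
        have e: "s ! i = map ((+) j) b ! (i - Suc (length a))" using s 3
          by (simp add: nth_append nth_Cons')
        have "i - Suc (length a) < length (map ((+) j) b)" using s i 3 by simp
        then have "s ! i \<in> set (map ((+) j) b)" unfolding e by (rule nth_mem)
        then have "s ! i \<le> m" using c1 by blast
        then show ?thesis using 3 A p by linarith
      qed
    qed
    have av: "avoids_010_120 s"
    proof -
      have "\<forall>x\<in>set a. \<forall>y\<in>set (m # map ((+) j) b). x < y" using A c1 p(3) by fastforce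
      then have "avoids_010_120 s \<longleftrightarrow> avoids_010_120 a \<and> avoids_010_120 (m # map ((+) j) b)"
        using s av_append by simp
      also have "avoids_010_120 (m # map ((+) j) b) \<longleftrightarrow> avoids_010_120 b"
        using av_Cons[of "map ((+) j) b" m] c1 av_shift by simp
      finally show ?thesis using A bE by simp
    qed
    have allle: "\<forall>y\<in>set s. y \<le> m"
    proof
      fix y assume y: "y \<in> set s"
      have aa: "\<forall>x\<in>set a. x \<le> m"
      proof
        fix x assume "x \<in> set a"
        then have "x \<le> j" using A by blast
        then show "x \<le> m" using p(3) by simp
      qed
      from y s consider "y \<in> set a" | "y = m" | "y \<in> set (map ((+) j) b)" by auto
      then show "y \<le> m"
      proof cases
        case 1 then show ?thesis using aa by blast
      next
        case 2 then show ?thesis by simp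
      next
        case 3 then show ?thesis using c1 by blast
      qed
    qed
    have mx: "Max (set s) = m"
      by (rule Max_eqI) (use allle s in auto)
    show "s \<in> S n m" using len inv av mx unfolding S_def by simp
  qed
  have sub2: "S n m \<subseteq> F ` T"
  proof
    fix s assume sS: "s \<in> S n m"
    then have sl: "length s = n" and sinv: "inversion_seq s" and sav: "avoids_010_120 s"
      and smax: "Max (set s) = m" unfolding S_def by auto
    have "s \<noteq> []" using sl assms by auto
    then have "m \<in> set s" using smax Max_in by (metis List.finite_set set_empty)
    then obtain a c where s: "s = a @ m # c" and ma: "m \<notin> set a" by (metis split_list_first)
    define k where "k = length a"
    have "k < length s" using s k_def by simp
    then have "s ! k < Suc k" using sinv unfolding inversion_seq_def by blast
    then have mk: "m \<le> k" using s k_def by (simp add: nth_append)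
    then have ane: "a \<noteq> []" using assms k_def by auto
    have sle: "\<forall>y\<in>set s. y \<le> m" using smax by (metis List.finite_set Max_ge)
    define j where "j = Max (set a)"
    have ja: "j \<in> set a" using ane j_def by simp
    have jm: "j < m" using ja ma sle s by (metis Un_iff le_neq_implies_less set_append)
    have ale: "\<forall>x\<in>set a. x \<le> j" using j_def by simp
    have cle: "\<forall>y\<in>set c. y \<le> m" using sle s by simp
    have cgt: "\<forall>y\<in>set c. j < y"
    proof (rule ccontr)
      assume "\<not> (\<forall>y\<in>set c. j < y)"
      then obtain y where y: "y \<in> set c" "y \<le> j" by auto
      obtain i where i: "i < length a" "a ! i = j" using ja by (metis in_set_conv_nth)
      obtain t where t: "t < length c" "c ! t = y" using y by (metis in_set_conv_nth)
      have si: "s ! i = j" "s ! k = m" "s ! (k + 1 + t) = y" "k + 1 + t < length s" "i < k"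
        using s i t k_def by (auto simp: nth_append)
      show False
      proof (cases "y = j")
        case True
        then have "contains_010 s" unfolding contains_010_def
          using si jm by (intro exI[of _ i] exI[of _ k] exI[of _ "k+1+t"]) auto
        then show False using sav unfolding avoids_010_120_def by simp
      next
        case False
        then have "contains_120 s" unfolding contains_120_def
          using si jm y by (intro exI[of _ i] exI[of _ k] exI[of _ "k+1+t"]) auto
        then show False using sav unfolding avoids_010_120_def by simp
      qed
    qed
    define b where "b = map (\<lambda>y. y - j) c"
    have cb: "c = map ((+) j) b" unfolding b_def using cgt by (induction c) auto
    have avac: "avoids_010_120 a" "avoids_010_120 (m # c)" using av_parts[of a "m # c"] sav s by simp_all
    have "avoids_010_120 c" using avac(2) av_Cons[OF cle] by simp
    then have avb: "avoids_010_120 b" using av_shift[of j b] cb by simp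
    have inva: "inversion_seq a" unfolding inversion_seq_def
    proof (intro allI impI)
      fix i assume i: "i < length a"
      then have "i < length s" "s ! i = a ! i" using s by (auto simp: nth_append)
      then show "a ! i < Suc i" using sinv unfolding inversion_seq_def by metis
    qed
    have aS: "a \<in> S (k + 1 - 1) j" unfolding S_def using inva avac(1) j_def k_def by simp
    have bset: "set b \<subseteq> {1..m-j}"
    proof
      fix x assume "x \<in> set b"
      then obtain y where y: "y \<in> set c" "x = y - j" by (auto simp: b_def)
      then have "j < y" "y \<le> m" using cgt cle by blast+
      then have "1 \<le> y - j" "y - j \<le> m - j" by linarith+
      then show "x \<in> {1..m-j}" using y(2) by simp
    qed
    have "length b = n - (k+1)" using sl s k_def b_def by simp
    then have bE: "b \<in> E (n - (k+1)) (m - j)" unfolding E_def using avb bset by simp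
    have kn: "k + 1 \<le> n" using sl s k_def by simp
    have "((k+1, j), (a, b)) \<in> T" unfolding T_def I_def using aS bE kn mk jm by auto
    moreover have "F ((k+1, j), (a, b)) = s" unfolding F_def using s cb by simp
    ultimately show "s \<in> F ` T" by (metis image_eqI)
  qed
  have "gcount n m = card (S n m)" unfolding gcount_def S_def by simp
  also have "\<dots> = card T" using sub1 sub2 card_image[OF inj] by simp
  also have "\<dots> = (\<Sum>x\<in>I. card (S (fst x - 1) (snd x)) * card (E (n - fst x) (m - snd x)))"
    unfolding T_def I_def by (simp add: card_cartesian_product finS finE)
  also have "\<dots> = (\<Sum>p = m+1..n. \<Sum>j = 0..<m. card (S (p - 1) j) * card (E (n - p) (m - j)))"
    unfolding I_def by (simp add: sum.Sigma split_beta)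
  also have "\<dots> = (\<Sum>p = m+1..n. \<Sum>j = 0..<m. gcount (p - 1) j * ecount (n - p) (m - j))"
    unfolding gcount_def ecount_def S_def E_def by simp
  finally show ?thesis .
qed

end
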